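(* Let $k\ge2$, let $p_1,\dots,p_k$ be distinct primes, $n=p_1\cdots p_k$, and let $$f(x)=(1-x^{n})\cdot\frac{\prod_{i=2}^k\big(1-x^{p_2\cdots p_k/p_i}\big)}{\prod_{i=1}^k\big(1-x^{n/p_i}\big)}\in\mathbb{Z}[[x]].$$ Let $f^*$ be the unique polynomial of degree $<n$ with $f^*\equiv f\pmod{x^n}$. Then every coefficient of $f^*$ has absolute value at most $\binom{k-2}{\lfloor (k-2)/2\rfloor}$.
   Context: $f$ is viewed as a formal power series (its denominator has constant term $1$). In the exponents, $p_2\cdots p_k/p_i$ means $p_2\cdots p_k$ divided by $p_i$. *)

theory Defs
  imports "HOL-Computational_Algebra.Computational_Algebra"
begin

end

theory Submission
  imports Defs "HOL-Number_Theory.Cong"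
begin


lemma LYM:
  fixes A :: "'a set" and F :: "'a set set"
  assumes "finite A" "F \<subseteq> Pow A" "\<forall>S\<in>F. \<forall>T\<in>F. S \<subseteq> T \<longrightarrow> S = T"
  shows "(\<Sum>S\<in>F. 1 / real (card A choose card S)) \<le> 1"
  using assms
proof (induction "card A" arbitrary: A F)
  case 0
  then have "A = {}" by simp
  with 0 have "F \<subseteq> {{}}" by auto
  then have "F = {} \<or> F = {{}}" by auto
  then show ?case using \<open>A = {}\<close> by auto
next
  case (Suc N)
  show ?case
  proof (cases "A \<in> F")
    case True
    have "F = {A}" using True Suc.prems by blast
    then show ?thesis by simp
  next
    case False
    have finF: "finite F" by (rule finite_subset[OF Suc.prems(2)]) (simp add: Suc.prems(1))
    have IH: "(\<Sum>S\<in>{S\<in>F. x \<notin> S}. 1 / real (N choose card S)) \<le> 1" if "x \<in> A" for x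
    proof -
      have "card (A - {x}) = N" using Suc.hyps(2) that Suc.prems(1) by simp
      moreover have "{S\<in>F. x \<notin> S} \<subseteq> Pow (A - {x})" using Suc.prems by auto
      moreover have "finite (A - {x})" using Suc.prems(1) by simp
      moreover have "\<forall>S\<in>{S\<in>F. x \<notin> S}. \<forall>T\<in>{S\<in>F. x \<notin> S}. S \<subseteq> T \<longrightarrow> S = T" using Suc.prems(3) by blast
      ultimately show ?thesis using Suc.hyps(1)[of "A - {x}" "{S\<in>F. x \<notin> S}"] by simp
    qed
    have "(\<Sum>x\<in>A. \<Sum>S\<in>{S\<in>F. x \<notin> S}. 1 / real (N choose card S)) \<le> (\<Sum>x\<in>A. 1)"
      by (rule sum_mono) (rule IH)
    also have "\<dots> = real (Suc N)" using Suc.hyps(2) by simp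
    finally have 1: "(\<Sum>x\<in>A. \<Sum>S\<in>{S\<in>F. x \<notin> S}. 1 / real (N choose card S)) \<le> real (Suc N)" .
    have "(\<Sum>x\<in>A. \<Sum>S\<in>{S\<in>F. x \<notin> S}. 1 / real (N choose card S))
        = (\<Sum>x\<in>A. \<Sum>S\<in>F. if x \<notin> S then 1 / real (N choose card S) else 0)"
      using finF by (simp add: sum.inter_filter)
    also have "\<dots> = (\<Sum>S\<in>F. \<Sum>x\<in>A. if x \<notin> S then 1 / real (N choose card S) else 0)"
      by (rule sum.swap)
    also have "\<dots> = (\<Sum>S\<in>F. real (card (A - S)) / real (N choose card S))"
    proof (rule sum.cong[OF refl])
      fix S assume "S \<in> F"
      have "(\<Sum>x\<in>A. if x \<notin> S then 1 / real (N choose card S) else 0) = (\<Sum>x\<in>A - S. 1 / real (N choose card S))"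
        using Suc.prems(1) by (intro sum.mono_neutral_cong_right) auto
      then show "(\<Sum>x\<in>A. if x \<notin> S then 1 / real (N choose card S) else 0) = real (card (A - S)) / real (N choose card S)"
        by simp
    qed
    also have "\<dots> = (\<Sum>S\<in>F. real (Suc N) / real (Suc N choose card S))"
    proof (rule sum.cong[OF refl])
      fix S assume S: "S \<in> F"
      then have "S \<subseteq> A" "S \<noteq> A" using Suc.prems False by auto
      then have "card S < card A" using Suc.prems(1) psubset_card_mono by blast
      then have cs: "card S \<le> N" using Suc.hyps(2) by simp
      have "card (A - S) = Suc N - card S" using \<open>S \<subseteq> A\<close> Suc.prems(1) Suc.hyps(2)
        by (simp add: card_Diff_subset finite_subset)
      moreover have "(Suc N - card S) * (Suc N choose card S) = Suc N * (N choose card S)"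
        using binomial_absorb_comp[of "Suc N" "card S"] by simp
      moreover have "N choose card S > 0" using cs by simp
      moreover have "Suc N choose card S > 0" using cs by simp
      ultimately have e: "real (card (A - S)) * real (Suc N choose card S) = real (Suc N) * real (N choose card S)"
        by (metis of_nat_mult)
      show "real (card (A - S)) / real (N choose card S) = real (Suc N) / real (Suc N choose card S)"
        using \<open>N choose card S > 0\<close> \<open>Suc N choose card S > 0\<close> e by (simp add: frac_eq_eq)
    qed
    also have "\<dots> = real (Suc N) * (\<Sum>S\<in>F. 1 / real (card A choose card S))"
      using Suc.hyps(2) by (simp add: sum_distrib_left)
    finally show ?thesis using 1 by simp
  qed
qed

lemma Sperner:
  fixes A :: "'a set" and F :: "'a set set"
  assumes "finite A" "F \<subseteq> Pow A" "\<forall>S\<in>F. \<forall>T\<in>F. S \<subseteq> T \<longrightarrow> S = T"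
  shows "card F \<le> card A choose (card A div 2)"
proof -
  let ?B = "real (card A choose (card A div 2))"
  have finF: "finite F" by (rule finite_subset[OF assms(2)]) (simp add: assms(1))
  have "real (card F) = (\<Sum>S\<in>F. 1)" by simp
  also have "\<dots> \<le> (\<Sum>S\<in>F. ?B / real (card A choose card S))"
  proof (rule sum_mono)
    fix S assume "S \<in> F"
    then have "card S \<le> card A" using assms by (meson PowD card_mono subsetD)
    then have "card A choose card S > 0" by simp
    moreover have "card A choose card S \<le> card A choose (card A div 2)" by (rule binomial_maximum)
    ultimately show "1 \<le> ?B / real (card A choose card S)" by (simp add: divide_simps)
  qed
  also have "\<dots> = ?B * (\<Sum>S\<in>F. 1 / real (card A choose card S))" by (simp add: sum_distrib_left)
  also have "\<dots> \<le> ?B * 1" by (rule mult_left_mono[OF LYM[OF assms]]) simp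
  finally show ?thesis by simp
qed

lemma alt_threshold:
  fixes I :: "'a set" and u w :: "'a \<Rightarrow> int" and C :: int
  assumes finI: "finite I" and ne: "I \<noteq> {}"
  shows "\<bar>\<Sum>S\<in>Pow I. (-1)^card S * (if (\<Sum>i\<in>I-S. u i) + (\<Sum>i\<in>S. w i) \<le> C then 1 else 0)\<bar>
           \<le> int ((card I - 1) choose ((card I - 1) div 2))"
proof -
  define \<delta> where "\<delta> j = \<bar>w j - u j\<bar>" for j
  have "Min (\<delta> ` I) \<in> \<delta> ` I" using finI ne by (intro Min_in) auto
  then obtain i0 where i0: "i0 \<in> I" "\<delta> i0 = Min (\<delta> ` I)" by auto
  have i0min: "\<delta> i0 \<le> \<delta> j" if "j \<in> I" for j
    unfolding i0(2) using finI that by (intro Min_le) auto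
  define J where "J = I - {i0}"
  have IJ: "I = insert i0 J" and i0J: "i0 \<notin> J" and finJ: "finite J"
    using i0(1) finI by (auto simp: J_def)
  define V where "V S = (\<Sum>i\<in>J-S. u i) + (\<Sum>i\<in>S. w i)" for S
  define h where "h S = (if (\<Sum>i\<in>I-S. u i) + (\<Sum>i\<in>S. w i) \<le> C then 1 else (0::int))" for S
  have h0: "h S = (if V S + u i0 \<le> C then 1 else 0)" if "S \<subseteq> J" for S
  proof -
    have "I - S = insert i0 (J - S)" using that IJ i0J by auto
    then have "(\<Sum>i\<in>I-S. u i) = u i0 + (\<Sum>i\<in>J-S. u i)" using finJ i0J by simp
    then show ?thesis by (simp add: h_def V_def algebra_simps)
  qed
  have h1: "h (insert i0 S) = (if V S + w i0 \<le> C then 1 else 0)" if "S \<subseteq> J" for S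
  proof -
    have "I - insert i0 S = J - S" using that IJ i0J by auto
    moreover have "(\<Sum>i\<in>insert i0 S. w i) = w i0 + (\<Sum>i\<in>S. w i)"
      using that i0J finJ finite_subset by (subst sum.insert) auto
    ultimately show ?thesis by (simp add: h_def V_def algebra_simps)
  qed
  have "(\<Sum>S\<in>Pow I. (-1)^card S * h S)
      = (\<Sum>S\<in>Pow J. (-1)^card S * h S) + (\<Sum>S\<in>insert i0 ` Pow J. (-1)^card S * h S)"
    unfolding IJ Pow_insert
    by (rule sum.union_disjoint) (use finJ i0J in auto)
  also have "(\<Sum>S\<in>insert i0 ` Pow J. (-1)^card S * h S) = (\<Sum>S\<in>Pow J. (-1)^card (insert i0 S) * h (insert i0 S))"
    by (rule sum.reindex[unfolded comp_def]) (use i0J in \<open>auto simp: inj_on_def\<close>)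
  also have "\<dots> = (\<Sum>S\<in>Pow J. - ((-1)^card S * h (insert i0 S)))"
  proof (rule sum.cong[OF refl])
    fix S assume "S \<in> Pow J"
    then have "finite S" "i0 \<notin> S" using finJ i0J finite_subset by auto
    then show "(-1)^card (insert i0 S) * h (insert i0 S) = - ((-1)^card S * h (insert i0 S))" by simp
  qed
  finally have tot: "(\<Sum>S\<in>Pow I. (-1)^card S * h S) = (\<Sum>S\<in>Pow J. (-1)^card S * (h S - h (insert i0 S)))"
    by (simp add: sum_subtractf[symmetric] algebra_simps sum_negf)
  define F where "F = {S\<in>Pow J. h S \<noteq> h (insert i0 S)}"
  have "\<bar>\<Sum>S\<in>Pow J. (-1)^card S * (h S - h (insert i0 S))\<bar> \<le> (\<Sum>S\<in>Pow J. \<bar>(-1)^card S * (h S - h (insert i0 S))\<bar>)"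
    by (rule sum_abs)
  also have "\<dots> = (\<Sum>S\<in>Pow J. if h S \<noteq> h (insert i0 S) then 1 else 0)"
    by (rule sum.cong[OF refl]) (auto simp: abs_mult h_def)
  also have "\<dots> = int (card F)"
    unfolding F_def using finJ by (simp add: sum.inter_filter[symmetric])
  finally have bound1: "\<bar>\<Sum>S\<in>Pow J. (-1)^card S * (h S - h (insert i0 S))\<bar> \<le> int (card F)" .
  define P where "P = {j\<in>J. w j < u j}"
  define \<phi> where "\<phi> S = (S - P) \<union> (P - S)" for S :: "'a set"
  define L where "L = (\<Sum>j\<in>J. min (u j) (w j))"
  have Vform: "V S = L + (\<Sum>j\<in>\<phi> S. \<delta> j)" if "S \<subseteq> J" for S
  proof -
    have "V S = (\<Sum>j\<in>J. if j \<in> S then w j else u j)"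
    proof -
      have "(\<Sum>j\<in>J. if j \<in> S then w j else u j) = (\<Sum>j\<in>J \<inter> S. w j) + (\<Sum>j\<in>J - S. u j)"
        using finJ by (simp add: sum.If_cases Diff_eq)
      moreover have "J \<inter> S = S" using that by auto
      ultimately show ?thesis by (simp add: V_def)
    qed
    also have "\<dots> = (\<Sum>j\<in>J. min (u j) (w j) + (if j \<in> \<phi> S then \<delta> j else 0))"
      by (rule sum.cong[OF refl]) (auto simp: \<phi>_def P_def \<delta>_def)
    also have "\<dots> = L + (\<Sum>j\<in>J. if j \<in> \<phi> S then \<delta> j else 0)"
      by (simp add: sum.distrib L_def)
    also have "(\<Sum>j\<in>J. if j \<in> \<phi> S then \<delta> j else 0) = (\<Sum>j\<in>J \<inter> \<phi> S. \<delta> j)"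
      using finJ by (simp add: sum.inter_restrict)
    also have "J \<inter> \<phi> S = \<phi> S" using that by (auto simp: \<phi>_def P_def)
    finally show ?thesis .
  qed
  have phiphi: "\<phi> (\<phi> S) = S" for S by (auto simp: \<phi>_def)
  have injphi: "inj_on \<phi> F" by (metis inj_onI phiphi)
  have F'sub: "\<phi> ` F \<subseteq> Pow J" by (auto simp: \<phi>_def P_def F_def)
  have Fprop: "min (u i0) (w i0) + V S \<le> C \<and> C < max (u i0) (w i0) + V S" if "S \<in> F" for S
    using that h0[of S] h1[of S] by (auto simp: F_def split: if_splits)
  have anti: "\<forall>S\<in>\<phi> ` F. \<forall>T\<in>\<phi> ` F. S \<subseteq> T \<longrightarrow> S = T"
  proof (intro ballI impI, rule ccontr)
    fix T1 T2 assume T1: "T1 \<in> \<phi> ` F" and T2: "T2 \<in> \<phi> ` F" and sub: "T1 \<subseteq> T2" and ne: "T1 \<noteq> T2"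
    obtain S1 S2 where S: "S1 \<in> F" "S2 \<in> F" "T1 = \<phi> S1" "T2 = \<phi> S2" using T1 T2 by auto
    have SJ: "S1 \<subseteq> J" "S2 \<subseteq> J" using S by (auto simp: F_def)
    have TJ: "T2 \<subseteq> J" using T2 F'sub by auto
    obtain j where j: "j \<in> T2" "j \<notin> T1" using sub ne by blast
    have finT2: "finite T2" using TJ finJ finite_subset by blast
    have "(\<Sum>i\<in>T2. \<delta> i) = (\<Sum>i\<in>T1. \<delta> i) + (\<Sum>i\<in>T2 - T1. \<delta> i)"
      using sub finT2 by (metis add.commute sum.subset_diff)
    moreover have "\<delta> j \<le> (\<Sum>i\<in>T2 - T1. \<delta> i)"
      using j finT2 by (intro member_le_sum) (auto simp: \<delta>_def)
    moreover have "\<delta> i0 \<le> \<delta> j" using i0min j TJ IJ by auto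
    ultimately have "V S2 \<ge> V S1 + \<delta> i0" using Vform[OF SJ(1)] Vform[OF SJ(2)] S by simp
    moreover have "\<delta> i0 = max (u i0) (w i0) - min (u i0) (w i0)" by (auto simp: \<delta>_def)
    ultimately show False using Fprop[OF S(1)] Fprop[OF S(2)] by linarith
  qed
  have "card F = card (\<phi> ` F)" using injphi by (simp add: card_image)
  also have "\<dots> \<le> card J choose (card J div 2)"
    by (rule Sperner[OF finJ F'sub anti])
  also have "card J = card I - 1" using IJ i0J finJ by simp
  finally have "card F \<le> (card I - 1) choose ((card I - 1) div 2)" .
  then show ?thesis using bound1 tot unfolding h_def[symmetric] by linarith
qed



lemma size_as_sum:
  assumes "finite A" "set_mset X \<subseteq> A"
  shows "size X = (\<Sum>x\<in>A. count X x)"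
proof -
  have "size X = (\<Sum>x\<in>set_mset X. count X x)" by (simp add: size_multiset_overloaded_eq)
  also have "\<dots> = (\<Sum>x\<in>A. count X x)"
    using assms by (intro sum.mono_neutral_left) (auto simp: not_in_iff)
  finally show ?thesis .
qed

lemma reps_card:
  fixes p B v :: "nat \<Rightarrow> nat" and I :: "nat set" and i1 n t :: nat
  assumes finI: "finite I" and i1: "i1 \<notin> I"
    and nB: "\<forall>i\<in>I. n = p i * B i"
    and dvdB: "\<forall>i\<in>I. \<forall>j\<in>insert i1 I. j \<noteq> i \<longrightarrow> p i dvd B j"
    and vinv: "\<forall>i\<in>I. [B i * v i = 1] (mod p i)"
    and pgt: "\<forall>i\<in>I. p i > 0"
    and B1: "\<forall>D. (\<forall>i\<in>I. p i dvd D) \<longrightarrow> B i1 dvd D"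
    and tn: "t < n"
  shows "card {X \<in> multisets_of_size (insert i1 I) t. \<forall>x\<in>insert i1 I. B x dvd count X x}
         = (if (\<Sum>i\<in>I. (t * v i) mod p i * B i) \<le> t then 1 else 0)"
proof -
  define I1 where "I1 = insert i1 I"
  define \<rho> where "\<rho> i = (t * v i) mod p i" for i
  define R where "R = {X \<in> multisets_of_size I1 t. \<forall>x\<in>I1. B x dvd count X x}"
  define Sr where "Sr = (\<Sum>i\<in>I. \<rho> i * B i)"
  have finI1: "finite I1" using finI by (simp add: I1_def)
  have congr: "[\<rho> i * B i = t] (mod p i)" if "i \<in> I" for i
  proof -
    have "[\<rho> i * B i = t * v i * B i] (mod p i)" by (simp add: \<rho>_def cong_def mod_mult_left_eq)
    also have "[t * v i * B i = t * 1] (mod p i)"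
      using cong_scalar_left[OF vinv[rule_format, OF that], of t] by (simp add: ac_simps)
    finally show ?thesis by simp
  qed
  have rlt: "\<rho> i < p i" if "i \<in> I" for i using pgt that by (simp add: \<rho>_def)
  have claim1: "(\<forall>i\<in>I. count X i = \<rho> i * B i) \<and> Sr \<le> t \<and> count X i1 = t - Sr"
    if X: "X \<in> R" for X
  proof -
    have sub: "set_mset X \<subseteq> I1" and sz: "size X = t" using X by (auto simp: R_def multisets_of_size_def)
    have sumt: "(\<Sum>x\<in>I1. count X x) = t" using size_as_sum[OF finI1 sub] sz by simp
    have ci: "count X i = \<rho> i * B i" if i: "i \<in> I" for i
    proof -
      have iI1: "i \<in> I1" using i by (simp add: I1_def)
      obtain c where c: "count X i = B i * c" using X iI1 by (auto simp: R_def)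
      have "count X i \<le> t" using sumt iI1 finI1 by (metis member_le_sum zero_le)
      moreover have "t < p i * B i" using tn nB i by simp
      ultimately have "B i * c < p i * B i" using c by linarith
      then have clt: "c < p i" by (metis mult.commute mult_less_cancel2)
      have dvdrest: "p i dvd (\<Sum>x\<in>I1 - {i}. count X x)"
      proof (rule dvd_sum)
        fix x assume x: "x \<in> I1 - {i}"
        then have "p i dvd B x" using dvdB i by (auto simp: I1_def)
        moreover have "B x dvd count X x" using X x by (auto simp: R_def)
        ultimately show "p i dvd count X x" by (rule dvd_trans)
      qed
      have "t = count X i + (\<Sum>x\<in>I1 - {i}. count X x)"
        using sumt finI1 iI1 by (metis sum.remove)
      then have "[t = count X i] (mod p i)" using dvdrest
        by (simp add: cong_def mod_add_right_eq[symmetric])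
      then have "[c * B i = \<rho> i * B i] (mod p i)" using congr[OF i] c
        by (metis cong_sym cong_trans mult.commute)
      then have "[c * B i * v i = \<rho> i * B i * v i] (mod p i)" by (rule cong_mult) simp
      then have "[c * (B i * v i) = \<rho> i * (B i * v i)] (mod p i)" by (simp add: ac_simps)
      moreover have "[c * (B i * v i) = c * 1] (mod p i)" "[\<rho> i * (B i * v i) = \<rho> i * 1] (mod p i)"
        using cong_scalar_left[OF vinv[rule_format, OF i]] by blast+
      ultimately have "[c = \<rho> i] (mod p i)" by (metis cong_sym cong_trans mult_1_right)
      then have "c = \<rho> i" using clt rlt[OF i] by (rule cong_less_modulus_unique_nat)
      then show ?thesis using c by simp
    qed
    have "(\<Sum>x\<in>I1. count X x) = count X i1 + (\<Sum>x\<in>I. count X x)"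
      using finI i1 by (simp add: I1_def)
    also have "(\<Sum>x\<in>I. count X x) = Sr" unfolding Sr_def by (rule sum.cong) (auto simp: ci)
    finally show ?thesis using sumt ci by auto
  qed
  have uniq: "X = Y" if "X \<in> R" "Y \<in> R" for X Y
  proof (rule multiset_eqI)
    fix y
    show "count X y = count Y y"
    proof (cases "y \<in> I1")
      case True
      then show ?thesis using claim1[OF that(1)] claim1[OF that(2)] by (auto simp: I1_def)
    next
      case False
      then have "y \<notin># X" "y \<notin># Y" using that by (auto simp: R_def multisets_of_size_def)
      then show ?thesis by (simp add: not_in_iff)
    qed
  qed
  have finR: "finite R" unfolding R_def using finI1 by (intro finite_subset[OF _ finite_multisets_of_size[OF finI1, of t]]) auto
  have le1: "card R \<le> 1" using finR uniq by (metis card_le_Suc0_iff_eq One_nat_def)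
  have ex: "R \<noteq> {}" if thr: "Sr \<le> t"
  proof -
    define cnt where "cnt x = (if x = i1 then t - Sr else \<rho> x * B x)" for x
    define X where "X = (\<Sum>x\<in>I1. replicate_mset (cnt x) x)"
    have cX: "count X y = (if y \<in> I1 then cnt y else 0)" for y
      unfolding X_def count_sum using finI1 by (simp add: count_replicate_mset sum.delta)
    have "set_mset X \<subseteq> I1"
    proof
      fix y assume "y \<in># X"
      then have "count X y \<noteq> 0" by (simp add: not_in_iff[symmetric])
      then show "y \<in> I1" using cX[of y] by (auto split: if_splits)
    qed
    moreover have "size X = t"
    proof -
      have "size X = (\<Sum>x\<in>I1. cnt x)" by (simp add: X_def)
      also have "\<dots> = cnt i1 + (\<Sum>x\<in>I. cnt x)" using finI i1 by (simp add: I1_def)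
      also have "(\<Sum>x\<in>I. cnt x) = Sr" unfolding Sr_def cnt_def using i1 by (intro sum.cong) auto
      finally show ?thesis using thr by (simp add: cnt_def)
    qed
    moreover have "\<forall>x\<in>I1. B x dvd count X x"
    proof
      fix x assume x: "x \<in> I1"
      show "B x dvd count X x"
      proof (cases "x = i1")
        case False
        then show ?thesis using cX x by (simp add: cnt_def)
      next
        case True
        have "p i dvd (t - Sr)" if i: "i \<in> I" for i
        proof -
          have "Sr = \<rho> i * B i + (\<Sum>j\<in>I - {i}. \<rho> j * B j)"
            unfolding Sr_def by (rule sum.remove[OF finI i])
          moreover have "p i dvd (\<Sum>j\<in>I - {i}. \<rho> j * B j)"
            using dvdB i by (intro dvd_sum) auto
          ultimately have "[Sr = \<rho> i * B i] (mod p i)" by (simp add: cong_def mod_add_right_eq[symmetric])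
          then have "[Sr = t] (mod p i)" using congr[OF i] by (rule cong_trans)
          then have "[t = Sr] (mod p i)" by (rule cong_sym)
          then have "[(t - Sr) + Sr = 0 + Sr] (mod p i)" using thr by simp
          then have "[t - Sr = 0] (mod p i)" by (simp only: cong_add_rcancel_nat)
          then show ?thesis by (simp add: cong_0_iff)
        qed
        then have "B i1 dvd (t - Sr)" using B1 by simp
        then show ?thesis using True cX x by (simp add: cnt_def)
      qed
    qed
    ultimately have "X \<in> R" by (simp add: R_def multisets_of_size_def)
    then show ?thesis by auto
  qed
  have "card R = (if Sr \<le> t then 1 else 0)"
  proof (cases "Sr \<le> t")
    case True
    have "card R > 0" using ex[OF True] finR by (simp add: card_gt_0_iff)
    then show ?thesis using le1 True by simp
  next
    case False
    then have "R = {}" using claim1 by blast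
    then show ?thesis using False by simp
  qed
  then show ?thesis by (simp add: R_def I1_def Sr_def \<rho>_def)
qed



definition Gd :: "nat \<Rightarrow> rat fps" where
  "Gd b = Abs_fps (\<lambda>t. if b dvd t then 1 else 0)"

lemma geo_inv:
  assumes "b > 0"
  shows "(1 - fps_X ^ b) * Gd b = 1"
proof (rule fps_ext)
  fix t
  have "((1 - fps_X ^ b) * Gd b) $ t = Gd b $ t - (fps_X ^ b * Gd b) $ t"
    by (simp add: algebra_simps)
  also have "\<dots> = (1::rat fps) $ t"
  proof (cases "t < b")
    case True
    then have "b dvd t \<longleftrightarrow> t = 0" using assms by (auto dest: dvd_imp_le)
    then show ?thesis using True by (simp add: fps_X_power_mult_nth Gd_def)
  next
    case False
    then have "b dvd (t - b) \<longleftrightarrow> b dvd t" by (simp add: dvd_minus_self)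
    then show ?thesis using False assms by (simp add: fps_X_power_mult_nth Gd_def)
  qed
  finally show "((1 - fps_X ^ b) * Gd b) $ t = (1::rat fps) $ t" .
qed

lemma inv_prod:
  assumes "finite I" "\<forall>i\<in>I. B i > 0"
  shows "(\<Prod>i\<in>I. 1 - fps_X ^ B i) * (\<Prod>i\<in>I. Gd (B i)) = 1"
proof -
  have "(\<Prod>i\<in>I. 1 - fps_X ^ B i) * (\<Prod>i\<in>I. Gd (B i)) = (\<Prod>i\<in>I. (1 - fps_X ^ B i) * Gd (B i))"
    by (simp add: prod.distrib)
  also have "\<dots> = (\<Prod>i\<in>I. 1)" using assms by (intro prod.cong refl geo_inv) auto
  finally show ?thesis by simp
qed

lemma coeff_prodG:
  assumes "finite I"
  shows "(\<Prod>i\<in>I. Gd (B i)) $ t = of_nat (card {X \<in> multisets_of_size I t. \<forall>x\<in>I. B x dvd count X x})"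
proof -
  have "(\<Prod>i\<in>I. Gd (B i)) $ t = (\<Sum>X\<in>multisets_of_size I t. \<Prod>x\<in>I. Gd (B x) $ count X x)"
    by (rule fps_prod_nth'[OF assms])
  also have "\<dots> = (\<Sum>X\<in>multisets_of_size I t. if \<forall>x\<in>I. B x dvd count X x then 1 else 0)"
  proof (rule sum.cong[OF refl])
    fix X
    show "(\<Prod>x\<in>I. Gd (B x) $ count X x) = (if \<forall>x\<in>I. B x dvd count X x then 1 else 0)"
    proof (cases "\<forall>x\<in>I. B x dvd count X x")
      case True
      then show ?thesis by (simp add: Gd_def)
    next
      case False
      then obtain x where "x \<in> I" "\<not> B x dvd count X x" by blast
      then have "\<exists>x\<in>I. Gd (B x) $ count X x = 0" by (auto simp: Gd_def)
      then have "(\<Prod>x\<in>I. Gd (B x) $ count X x) = 0" using assms by (rule prod_zero[rotated])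
      then show ?thesis using False by simp
    qed
  qed
  also have "\<dots> = of_nat (card {X \<in> multisets_of_size I t. \<forall>x\<in>I. B x dvd count X x})"
    using finite_multisets_of_size[OF assms, of t] by (simp add: sum.inter_filter[symmetric])
  finally show ?thesis .
qed

lemma prod_dvd_primes:
  fixes p :: "nat \<Rightarrow> nat"
  assumes "finite A" "\<forall>i\<in>A. prime (p i)" "inj_on p A" "\<forall>i\<in>A. p i dvd D"
  shows "prod p A dvd D"
  using assms
proof (induction A rule: finite_induct)
  case empty
  then show ?case by simp
next
  case (insert x A)
  have "\<not> p x dvd prod p A"
  proof
    assume "p x dvd prod p A"
    then obtain y where y: "y \<in> A" "p x dvd p y" using insert by (auto simp: prime_dvd_prod_iff)
    then have pxy: "p x = p y" using insert by (intro primes_dvd_imp_eq) auto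
    have "x \<noteq> y" using insert y by auto
    moreover have "x = y" using inj_onD[OF insert.prems(2) pxy] y by simp
    ultimately show False by simp
  qed
  then have cop: "coprime (p x) (prod p A)" using insert.prems(1) by (intro prime_imp_coprime) auto
  have "inj_on p A" using insert.prems(2) by (rule inj_on_subset) auto
  then have pA: "prod p A dvd D" using insert.prems(1,3) insert.IH by auto
  have "p x dvd D" using insert.prems(3) by simp
  then have "p x * prod p A dvd D" using pA cop by (rule divides_mult)
  then show ?case using insert.hyps by simp
qed


lemma neg1pow_nth: "((-1::rat fps)^c * G) $ e = (-1)^c * G $ e"
  by (induction c) (auto simp: fps_neg_nth)

theorem lemma2:
  fixes p :: "nat \<Rightarrow> nat" and k n :: nat and f :: "rat fps"
  assumes "k \<ge> 2"
    and "\<forall>i\<in>{1..k}. prime (p i)"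
    and "inj_on p {1..k}"
    and "n = (\<Prod>i\<in>{1..k}. p i)"
    and "f = (1 - fps_X ^ n) * (\<Prod>i\<in>{2..k}. 1 - fps_X ^ (\<Prod>j\<in>{2..k} - {i}. p j))
               / (\<Prod>i\<in>{1..k}. 1 - fps_X ^ (\<Prod>j\<in>{1..k} - {i}. p j))"
  shows "\<forall>m. \<bar>coeff (truncate_fps n f) m\<bar> \<le> of_nat ((k - 2) choose ((k - 2) div 2))"
proof -
  define I :: "nat set" where "I = {2..k}"
  define I1 :: "nat set" where "I1 = {1..k}"
  have finI: "finite I" and finI1: "finite I1" by (simp_all add: I_def I1_def)
  have I1eq: "I1 = insert 1 I" using assms(1) by (auto simp: I_def I1_def)
  have oneI: "1 \<notin> I" by (simp add: I_def)
  have Ine: "I \<noteq> {}" using assms(1) by (simp add: I_def)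
  have cardI: "card I - 1 = k - 2" by (simp add: I_def)
  have pr: "\<forall>i\<in>I1. prime (p i)" using assms(2) by (simp add: I1_def)
  have inj: "inj_on p I1" using assms(3) by (simp add: I1_def)
  have ppos: "p i > 0" if "i \<in> I1" for i using pr that prime_gt_0_nat by blast
  define a where "a i = (\<Prod>j\<in>I - {i}. p j)" for i
  define B where "B i = (\<Prod>j\<in>I1 - {i}. p j)" for i
  have nI1: "n = (\<Prod>i\<in>I1. p i)" using assms(4) by (simp add: I1_def)
  have nB: "\<forall>i\<in>I1. n = p i * B i" using nI1 finI1 by (auto simp: B_def prod.remove)
  have Bpos: "\<forall>i\<in>I1. B i > 0" unfolding B_def by (intro ballI prod_pos) (use ppos in blast)
  have dvdB: "\<forall>i\<in>I1. \<forall>j\<in>I1. j \<noteq> i \<longrightarrow> p i dvd B j"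
    unfolding B_def using finI1 by (auto intro!: dvd_prodI)
  have ndvd: "\<not> p i dvd B i" if i: "i \<in> I1" for i
  proof
    assume "p i dvd B i"
    then obtain j where j: "j \<in> I1 - {i}" "p i dvd p j"
      using pr i finI1 by (auto simp: B_def prime_dvd_prod_iff)
    then have pij: "p i = p j" using pr i by (intro primes_dvd_imp_eq) auto
    have "i = j" using inj_onD[OF inj pij] i j by simp
    then show False using j by simp
  qed
  have "\<forall>i\<in>I. \<exists>x. [B i * x = 1] (mod p i)"
  proof
    fix i assume i: "i \<in> I"
    then have iI1: "i \<in> I1" using I1eq by simp
    have "coprime (p i) (B i)" using pr ndvd iI1 by (intro prime_imp_coprime) auto
    then have "coprime (B i) (p i)" by (simp add: coprime_commute)
    then show "\<exists>x. [B i * x = 1] (mod p i)" using cong_solve_coprime_nat by simp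
  qed
  from bchoice[OF this] obtain v where vinv: "\<forall>i\<in>I. [B i * v i = 1] (mod p i)" by blast
  have B1: "\<forall>D. (\<forall>i\<in>I. p i dvd D) \<longrightarrow> B 1 dvd D"
  proof (intro allI impI)
    fix D assume D: "\<forall>i\<in>I. p i dvd D"
    have "I1 - {1} = I" using I1eq oneI by auto
    then have "B 1 = prod p I" by (simp add: B_def)
    moreover have "inj_on p I" using inj I1eq by (auto intro: inj_on_subset)
    ultimately show "B 1 dvd D" using prod_dvd_primes[OF finI _ _ D] pr I1eq by auto
  qed
  have adv: "p i dvd a j" if "i \<in> I" "j \<in> I" "j \<noteq> i" for i j
    unfolding a_def using finI that by (auto intro!: dvd_prodI)
  have pgtI: "\<forall>i\<in>I. p i > 0" using ppos I1eq by auto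
  define Pn where "Pn = (\<Prod>i\<in>I. 1 - fps_X ^ a i :: rat fps)"
  define Q where "Q = (\<Prod>i\<in>I1. 1 - fps_X ^ B i :: rat fps)"
  define H where "H = (\<Prod>i\<in>I1. Gd (B i))"
  have QH: "Q * H = 1" using inv_prod[OF finI1 Bpos] by (simp add: Q_def H_def)
  have Q0: "Q $ 0 \<noteq> 0"
  proof
    assume "Q $ 0 = 0"
    then have "(Q * H) $ 0 = 0" by simp
    then show False using QH by simp
  qed
  have fdef: "f = (1 - fps_X ^ n) * Pn / Q"
    using assms(5) by (simp add: Pn_def Q_def a_def B_def I_def I1_def)
  have finv: "f = (1 - fps_X ^ n) * (Pn * H)"
  proof -
    have "f = (1 - fps_X ^ n) * Pn * inverse Q" using fdef Q0 by (simp add: fps_divide_unit)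
    also have "inverse Q = H" using QH by (rule fps_inverse_unique)
    finally show ?thesis by (simp add: mult.assoc)
  qed
  have Pn_exp: "Pn = (\<Sum>S\<in>Pow I. (-1)^card S * fps_X ^ (\<Sum>i\<in>S. a i))"
  proof -
    have "Pn = (\<Prod>i\<in>I. (- (fps_X ^ a i)) + 1)" by (simp add: Pn_def)
    also have "\<dots> = (\<Sum>S\<in>Pow I. (\<Prod>i\<in>S. - (fps_X ^ a i)) * (\<Prod>i\<in>I - S. 1))"
      by (rule prod_add[OF finI])
    also have "\<dots> = (\<Sum>S\<in>Pow I. (-1)^card S * fps_X ^ (\<Sum>i\<in>S. a i))"
    proof (rule sum.cong[OF refl])
      fix S assume "S \<in> Pow I"
      have "(\<Prod>i\<in>S. - (fps_X ^ a i)) = (\<Prod>i\<in>S. (-1) * fps_X ^ a i :: rat fps)" by simp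
      also have "\<dots> = (-1)^card S * (\<Prod>i\<in>S. fps_X ^ a i)" by (simp only: prod.distrib prod_constant)
      also have "(\<Prod>i\<in>S. fps_X ^ a i) = (fps_X ^ (\<Sum>i\<in>S. a i) :: rat fps)" by (simp add: power_sum)
      finally show "(\<Prod>i\<in>S. - (fps_X ^ a i)) * (\<Prod>i\<in>I - S. 1) = (-1)^card S * (fps_X ^ (\<Sum>i\<in>S. a i) :: rat fps)"
        by simp
    qed
    finally show ?thesis .
  qed
  have key: "(Pn * H) $ e = (\<Sum>S\<in>Pow I. (-1)^card S * (if (\<Sum>i\<in>S. a i) \<le> e then H $ (e - (\<Sum>i\<in>S. a i)) else 0))" for e
  proof -
    have "Pn * H = (\<Sum>S\<in>Pow I. (-1)^card S * (fps_X ^ (\<Sum>i\<in>S. a i) * H))"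
      unfolding Pn_exp by (simp add: sum_distrib_right mult.assoc)
    then show ?thesis
      by (simp add: fps_sum_nth neg1pow_nth fps_X_power_mult_nth) (rule sum.cong[OF refl], simp add: not_less)
  qed
  have Hcard: "H $ t = (if (\<Sum>i\<in>I. (t * v i) mod p i * B i) \<le> t then 1 else 0)" if tn: "t < n" for t
  proof -
    have "H $ t = of_nat (card {X \<in> multisets_of_size I1 t. \<forall>x\<in>I1. B x dvd count X x})"
      unfolding H_def by (rule coeff_prodG[OF finI1])
    also have "card {X \<in> multisets_of_size I1 t. \<forall>x\<in>I1. B x dvd count X x}
        = (if (\<Sum>i\<in>I. (t * v i) mod p i * B i) \<le> t then 1 else 0)"
      unfolding I1eq
      by (rule reps_card[OF finI oneI _ _ vinv pgtI B1 tn]) (use nB dvdB I1eq in auto)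
    finally show ?thesis by simp
  qed
  show ?thesis
  proof
    fix e
    show "\<bar>coeff (truncate_fps n f) e\<bar> \<le> of_nat ((k - 2) choose ((k - 2) div 2))"
    proof (cases "e < n")
      case False
      then show ?thesis by (simp add: coeff_truncate_fps)
    next
      case True
      define u where "u i = (e * v i) mod p i * B i" for i
      define r' where "r' i = ((e + (p i - 1) * a i) * v i) mod p i" for i
      define w where "w i = r' i * B i + a i" for i
      have thr: "(if (\<Sum>i\<in>S. a i) \<le> e then (if (\<Sum>i\<in>I. ((e - (\<Sum>i\<in>S. a i)) * v i) mod p i * B i) \<le> e - (\<Sum>i\<in>S. a i) then 1 else 0) else 0)
               = (if (\<Sum>i\<in>I-S. u i) + (\<Sum>i\<in>S. w i) \<le> e then (1::nat) else 0)" if S: "S \<subseteq> I" for S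
      proof -
        define s where "s = (\<Sum>i\<in>S. a i)"
        have finS: "finite S" using S finI finite_subset by blast
        have sw: "(\<Sum>i\<in>S. w i) = (\<Sum>i\<in>S. r' i * B i) + s" by (simp add: w_def s_def sum.distrib)
        show ?thesis
        proof (cases "s \<le> e")
          case False
          then show ?thesis using sw by (simp add: s_def)
        next
          case True
          define x where "x = e - s"
          have xs: "x + s = e" using True by (simp add: x_def)
          have rho: "(x * v i) mod p i * B i = (if i \<in> S then r' i * B i else u i)" if i: "i \<in> I" for i
          proof -
            have sdec: "s = (if i\<in>S then a i else 0) + (\<Sum>j\<in>S-{i}. a j)"
              using finS by (cases "i \<in> S") (simp_all add: s_def sum.remove)
            have "p i dvd (\<Sum>j\<in>S-{i}. a j)" using S i by (intro dvd_sum adv) auto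
            then have scong: "[s = (if i\<in>S then a i else 0)] (mod p i)"
              using sdec by (simp add: cong_def mod_add_right_eq[symmetric])
            have xc: "[x = (if i \<in> S then e + (p i - 1) * a i else e)] (mod p i)"
            proof (cases "i \<in> S")
              case True
              have "[x + s = x + a i] (mod p i)" using scong True by (simp add: cong_add_lcancel_nat)
              then have "[x + a i = e] (mod p i)" using xs by (metis cong_sym)
              moreover have "[e = e + p i * a i] (mod p i)" by (simp add: cong_def)
              moreover have "e + p i * a i = e + (p i - 1) * a i + a i"
                using pgtI i by (cases "p i") auto
              ultimately have "[x + a i = e + (p i - 1) * a i + a i] (mod p i)"
                by (metis cong_trans)
              then have "[x = e + (p i - 1) * a i] (mod p i)" by (simp only: cong_add_rcancel_nat)
              then show ?thesis using True by simp
            next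
              case False
              have s0: "[s = 0] (mod p i)" using scong False by simp
              have "[x + s = x + 0] (mod p i)" by (rule cong_add[OF cong_refl s0])
              then have "[x = e] (mod p i)" using xs by (metis cong_sym add_0_right)
              then show ?thesis using False by simp
            qed
            have "[x * v i = (if i \<in> S then e + (p i - 1) * a i else e) * v i] (mod p i)"
              using xc by (rule cong_mult) simp
            then have "(x * v i) mod p i = ((if i \<in> S then e + (p i - 1) * a i else e) * v i) mod p i"
              by (simp add: cong_def)
            then show ?thesis by (simp add: r'_def u_def split: if_splits)
          qed
          have "(\<Sum>i\<in>I. (x * v i) mod p i * B i) = (\<Sum>i\<in>I. if i \<in> S then r' i * B i else u i)"
            using rho by (intro sum.cong) auto
          also have "\<dots> = (\<Sum>i\<in>I - S. if i \<in> S then r' i * B i else u i) + (\<Sum>i\<in>S. if i \<in> S then r' i * B i else u i)"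
            using S finI by (rule sum.subset_diff)
          also have "\<dots> = (\<Sum>i\<in>I - S. u i) + (\<Sum>i\<in>S. r' i * B i)"
            by (intro arg_cong2[where f="(+)"] sum.cong refl) auto
          finally have eq1: "(\<Sum>i\<in>I. ((e - (\<Sum>i\<in>S. a i)) * v i) mod p i * B i) = (\<Sum>i\<in>I - S. u i) + (\<Sum>i\<in>S. r' i * B i)"
            unfolding x_def s_def .
          have le: "(\<Sum>i\<in>S. a i) \<le> e" using True by (simp add: s_def)
          have iff: "((\<Sum>i\<in>I-S. u i) + (\<Sum>i\<in>S. r' i * B i) \<le> e - (\<Sum>i\<in>S. a i)) \<longleftrightarrow> ((\<Sum>i\<in>I-S. u i) + (\<Sum>i\<in>S. w i) \<le> e)"
            using sw le unfolding s_def by linarith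
          show ?thesis by (simp only: le if_True eq1 iff)
        qed
      qed
      have "f = Pn * H - fps_X ^ n * (Pn * H)" by (simp add: finv left_diff_distrib)
      then have "f $ e = (Pn * H) $ e" using True by (simp add: fps_X_power_mult_nth)
      also have "\<dots> = (\<Sum>S\<in>Pow I. (-1)^card S * (if (\<Sum>i\<in>S. a i) \<le> e then H $ (e - (\<Sum>i\<in>S. a i)) else 0))"
        by (rule key)
      also have "\<dots> = (\<Sum>S\<in>Pow I. (-1)^card S * of_nat (if (\<Sum>i\<in>I-S. u i) + (\<Sum>i\<in>S. w i) \<le> e then (1::nat) else 0))"
      proof (rule sum.cong[OF refl])
        fix S assume S: "S \<in> Pow I"
        have "(if (\<Sum>i\<in>S. a i) \<le> e then H $ (e - (\<Sum>i\<in>S. a i)) else 0)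
            = of_nat (if (\<Sum>i\<in>S. a i) \<le> e then (if (\<Sum>i\<in>I. ((e - (\<Sum>i\<in>S. a i)) * v i) mod p i * B i) \<le> e - (\<Sum>i\<in>S. a i) then 1 else 0) else 0)"
        proof (cases "(\<Sum>i\<in>S. a i) \<le> e")
          case True2: True
          have "e - (\<Sum>i\<in>S. a i) < n" using True by linarith
          from Hcard[OF this] show ?thesis using True2 by simp
        qed simp
        then show "(-1)^card S * (if (\<Sum>i\<in>S. a i) \<le> e then H $ (e - (\<Sum>i\<in>S. a i)) else 0)
            = (-1)^card S * of_nat (if (\<Sum>i\<in>I-S. u i) + (\<Sum>i\<in>S. w i) \<le> e then (1::nat) else 0)"
          using thr[of S] S by simp
      qed
      also have "\<dots> = of_int (\<Sum>S\<in>Pow I. (-1)^card S * (if (\<Sum>i\<in>I-S. int (u i)) + (\<Sum>i\<in>S. int (w i)) \<le> int e then 1 else 0))"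
        unfolding of_int_sum
      proof (rule sum.cong[OF refl])
        fix S :: "nat set"
        have c: "((\<Sum>i\<in>I-S. int (u i)) + (\<Sum>i\<in>S. int (w i)) \<le> int e) = ((\<Sum>i\<in>I-S. u i) + (\<Sum>i\<in>S. w i) \<le> e)"
          by (simp only: of_nat_sum[symmetric] of_nat_add[symmetric] of_nat_le_iff)
        show "(-1)^card S * of_nat (if (\<Sum>i\<in>I-S. u i) + (\<Sum>i\<in>S. w i) \<le> e then (1::nat) else 0)
           = (of_int ((-1)^card S * (if (\<Sum>i\<in>I-S. int (u i)) + (\<Sum>i\<in>S. int (w i)) \<le> int e then 1 else 0)) :: rat)"
          unfolding c by simp
      qed
      finally have fe: "f $ e = of_int (\<Sum>S\<in>Pow I. (-1)^card S * (if (\<Sum>i\<in>I-S. int (u i)) + (\<Sum>i\<in>S. int (w i)) \<le> int e then 1 else 0))"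
        (is "_ = of_int ?z") .
      have bnd: "\<bar>?z\<bar> \<le> int ((card I - 1) choose ((card I - 1) div 2))"
        by (rule alt_threshold[OF finI Ine])
      then have bnd': "\<bar>?z\<bar> \<le> int ((k - 2) choose ((k - 2) div 2))" by (simp only: cardI)
      have "(of_int \<bar>?z\<bar> :: rat) \<le> of_int (int ((k - 2) choose ((k - 2) div 2)))"
        using bnd' by (simp only: of_int_le_iff)
      then have fb: "\<bar>f $ e\<bar> \<le> of_nat ((k - 2) choose ((k - 2) div 2))"
        by (simp only: fe of_int_abs of_int_of_nat_eq)
      have "\<bar>coeff (truncate_fps n f) e\<bar> = \<bar>f $ e\<bar>" using True by (simp add: coeff_truncate_fps)
      then show ?thesis using fb by simp
    qed
  qed
qed

end
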